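(* For $n\ge1$, $$\left|\Pi_n \wr C_2 (1^11^1, 1^11^2, 1^21^1)\right|=\left|\Pi_n \wr C_2 (1^11^2, 1^21^1, 1^12^1)\right|=\left|\Pi_n \wr C_2 (1^12^1, 1^12^2, 1^22^1)\right|=2^n.$$
   Context: For $n\ge0$ let $[n]=\{1,\dots,n\}$. A $2$-colored set partition of $[n]$ is a set partition of $[n]$ together with an assignment of a color from $\{1,2\}$ to each element; $\Pi_n\wr C_2$ is the set of these. For a set $S$ of patterns, $\Pi_n\wr C_2(S)$ is the set of such colored partitions avoiding every pattern in $S$ in the pattern sense. For the patterns used here: $\sigma$ contains $1^11^1$ iff two elements in the same block have the same color; $1^11^2$ iff there are $i<j$ in the same block with $i$ colored $1$ and $j$ colored $2$; $1^21^1$ iff there are $i<j$ in the same block with $i$ colored $2$ and $j$ colored $1$; $1^12^1$ iff two elements in different blocks have the same color; $1^12^2$ iff there are $i<j$ in different blocks with $i$ colored $1$ and $j$ colored $2$; $1^22^1$ iff there are $i<j$ in different blocks with $i$ colored $2$ and $j$ colored $1$. *)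

theory Defs
  imports "HOL-Library.Disjoint_Sets" "HOL-Library.FuncSet"
begin

type_synonym colored_partition = "nat set set \<times> (nat \<Rightarrow> nat)"

definition colored_partitions :: "nat \<Rightarrow> colored_partition set" where
  "colored_partitions n = {(P, c). partition_on {1..n} P \<and> c \<in> {1..n} \<rightarrow>\<^sub>E {1, 2}}"

definition same_block :: "nat set set \<Rightarrow> nat \<Rightarrow> nat \<Rightarrow> bool" where
  "same_block P i j \<longleftrightarrow> (\<exists>B\<in>P. i \<in> B \<and> j \<in> B)"

definition diff_blocks :: "nat set set \<Rightarrow> nat \<Rightarrow> nat \<Rightarrow> bool" where
  "diff_blocks P i j \<longleftrightarrow> i \<in> \<Union>P \<and> j \<in> \<Union>P \<and> \<not> same_block P i j"

text \<open>The six patterns; constructor Pab_cd stands for 1^a b^c... precisely: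
  P11_11 = 1^1 1^1, P11_12 = 1^1 1^2, P12_11 = 1^2 1^1,
  P11_21 = 1^1 2^1, P11_22 = 1^1 2^2, P12_21 = 1^2 2^1.\<close>

datatype pattern = P11_11 | P11_12 | P12_11 | P11_21 | P11_22 | P12_21

fun contains :: "colored_partition \<Rightarrow> pattern \<Rightarrow> bool" where
  "contains (P, c) P11_11 \<longleftrightarrow> (\<exists>i j. i < j \<and> same_block P i j \<and> c i = c j)"
| "contains (P, c) P11_12 \<longleftrightarrow> (\<exists>i j. i < j \<and> same_block P i j \<and> c i = 1 \<and> c j = 2)"
| "contains (P, c) P12_11 \<longleftrightarrow> (\<exists>i j. i < j \<and> same_block P i j \<and> c i = 2 \<and> c j = 1)"
| "contains (P, c) P11_21 \<longleftrightarrow> (\<exists>i j. i < j \<and> diff_blocks P i j \<and> c i = c j)"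
| "contains (P, c) P11_22 \<longleftrightarrow> (\<exists>i j. i < j \<and> diff_blocks P i j \<and> c i = 1 \<and> c j = 2)"
| "contains (P, c) P12_21 \<longleftrightarrow> (\<exists>i j. i < j \<and> diff_blocks P i j \<and> c i = 2 \<and> c j = 1)"

definition avoiding :: "nat \<Rightarrow> pattern set \<Rightarrow> colored_partition set" where
  "avoiding n S = {\<sigma> \<in> colored_partitions n. \<forall>p\<in>S. \<not> contains \<sigma> p}"

end

theory Submission
  imports Defs
begin

lemma same_block_sym: "same_block P i j = same_block P j i"
  unfolding same_block_def by blast

lemma part_uniq:
  assumes "partition_on A P" "B \<in> P" "B' \<in> P" "x \<in> B" "x \<in> B'"
  shows "B = B'"
proof (rule ccontr)
  assume "B \<noteq> B'"
  hence "B \<inter> B' = {}" using assms(1,2,3) unfolding partition_on_def disjoint_def by blast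
  thus False using assms(4,5) by blast
qed

lemma part_sub: "partition_on A P \<Longrightarrow> B \<in> P \<Longrightarrow> B \<subseteq> A"
  unfolding partition_on_def by blast

lemma block_eq:
  assumes P: "partition_on A P" and B: "B \<in> P" and x: "x \<in> B"
  shows "B = {i\<in>A. same_block P x i}"
proof (rule set_eqI, rule iffI)
  fix i assume i: "i \<in> B"
  have "i \<in> A" using part_sub[OF P B] i by blast
  moreover have "same_block P x i" unfolding same_block_def using B x i by blast
  ultimately show "i \<in> {i\<in>A. same_block P x i}" by simp
next
  fix i assume "i \<in> {i\<in>A. same_block P x i}"
  then obtain B' where B': "B' \<in> P" "x \<in> B'" "i \<in> B'" unfolding same_block_def by blast
  have "B' = B" using part_uniq[OF P B'(1) B B'(2) x] .
  thus "i \<in> B" using B' by simp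
qed

lemma blocks_eq:
  assumes "partition_on A P"
  shows "P = (\<lambda>x. {i\<in>A. same_block P x i}) ` A"
proof
  show "P \<subseteq> (\<lambda>x. {i\<in>A. same_block P x i}) ` A"
  proof
    fix B assume B: "B \<in> P"
    have "B \<noteq> {}" using assms B unfolding partition_on_def by blast
    then obtain x where x: "x \<in> B" by blast
    have xA: "x \<in> A" using part_sub[OF assms B] x by blast
    have "B = {i\<in>A. same_block P x i}" by (rule block_eq[OF assms B x])
    thus "B \<in> (\<lambda>x. {i\<in>A. same_block P x i}) ` A" using xA by blast
  qed
next
  show "(\<lambda>x. {i\<in>A. same_block P x i}) ` A \<subseteq> P"
  proof
    fix C assume "C \<in> (\<lambda>x. {i\<in>A. same_block P x i}) ` A"
    then obtain x where xA: "x \<in> A" and C: "C = {i\<in>A. same_block P x i}" by blast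
    obtain B where B: "B \<in> P" "x \<in> B" using assms xA unfolding partition_on_def by blast
    have "C = B" using C block_eq[OF assms B] by simp
    thus "C \<in> P" using B by simp
  qed
qed

lemma pat11_11: "i < j \<Longrightarrow> same_block P i j \<Longrightarrow> c i = c j \<Longrightarrow> contains (P,c) P11_11"
  by (simp only: contains.simps) (rule exI[of _ i], rule exI[of _ j], simp)
lemma pat11_12: "i < j \<Longrightarrow> same_block P i j \<Longrightarrow> c i = 1 \<Longrightarrow> c j = 2 \<Longrightarrow> contains (P,c) P11_12"
  by (simp only: contains.simps) (rule exI[of _ i], rule exI[of _ j], simp)
lemma pat12_11: "i < j \<Longrightarrow> same_block P i j \<Longrightarrow> c i = 2 \<Longrightarrow> c j = 1 \<Longrightarrow> contains (P,c) P12_11"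
  by (simp only: contains.simps) (rule exI[of _ i], rule exI[of _ j], simp)
lemma pat11_21: "i < j \<Longrightarrow> diff_blocks P i j \<Longrightarrow> c i = c j \<Longrightarrow> contains (P,c) P11_21"
  by (simp only: contains.simps) (rule exI[of _ i], rule exI[of _ j], simp)
lemma pat11_22: "i < j \<Longrightarrow> diff_blocks P i j \<Longrightarrow> c i = 1 \<Longrightarrow> c j = 2 \<Longrightarrow> contains (P,c) P11_22"
  by (simp only: contains.simps) (rule exI[of _ i], rule exI[of _ j], simp)
lemma pat12_21: "i < j \<Longrightarrow> diff_blocks P i j \<Longrightarrow> c i = 2 \<Longrightarrow> c j = 1 \<Longrightarrow> contains (P,c) P12_21"
  by (simp only: contains.simps) (rule exI[of _ i], rule exI[of _ j], simp)

lemma diff_any: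
  assumes "diff_blocks P x i" "diff_blocks P i x" "x \<noteq> i" "c x = 1 \<or> c x = 2" "c i = 1 \<or> c i = 2"
  shows "contains (P,c) P11_21 \<or> contains (P,c) P11_22 \<or> contains (P,c) P12_21"
proof (cases "x < i")
  case True
  show ?thesis using assms(4,5)
  proof (elim disjE)
    assume "c x = 1" "c i = 1" thus ?thesis using pat11_21[OF True assms(1)] by simp
  next
    assume "c x = 1" "c i = 2" thus ?thesis using pat11_22[OF True assms(1)] by simp
  next
    assume "c x = 2" "c i = 1" thus ?thesis using pat12_21[OF True assms(1)] by simp
  next
    assume "c x = 2" "c i = 2" thus ?thesis using pat11_21[OF True assms(1)] by simp
  qed
next
  case False
  hence T: "i < x" using assms(3) by simp
  show ?thesis using assms(4,5)
  proof (elim disjE)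
    assume "c x = 1" "c i = 1" thus ?thesis using pat11_21[OF T assms(2)] by simp
  next
    assume "c x = 1" "c i = 2" thus ?thesis using pat12_21[OF T assms(2)] by simp
  next
    assume "c x = 2" "c i = 1" thus ?thesis using pat11_22[OF T assms(2)] by simp
  next
    assume "c x = 2" "c i = 2" thus ?thesis using pat11_21[OF T assms(2)] by simp
  qed
qed

lemma same_any:
  assumes "same_block P x i" "same_block P i x" "x \<noteq> i" "c x = 1 \<or> c x = 2" "c i = 1 \<or> c i = 2"
  shows "contains (P,c) P11_11 \<or> contains (P,c) P11_12 \<or> contains (P,c) P12_11"
proof (cases "x < i")
  case True
  show ?thesis using assms(4,5)
  proof (elim disjE)
    assume "c x = 1" "c i = 1" thus ?thesis using pat11_11[OF True assms(1)] by simp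
  next
    assume "c x = 1" "c i = 2" thus ?thesis using pat11_12[OF True assms(1)] by simp
  next
    assume "c x = 2" "c i = 1" thus ?thesis using pat12_11[OF True assms(1)] by simp
  next
    assume "c x = 2" "c i = 2" thus ?thesis using pat11_11[OF True assms(1)] by simp
  qed
next
  case False
  hence T: "i < x" using assms(3) by simp
  show ?thesis using assms(4,5)
  proof (elim disjE)
    assume "c x = 1" "c i = 1" thus ?thesis using pat11_11[OF T assms(2)] by simp
  next
    assume "c x = 1" "c i = 2" thus ?thesis using pat12_11[OF T assms(2)] by simp
  next
    assume "c x = 2" "c i = 1" thus ?thesis using pat11_12[OF T assms(2)] by simp
  next
    assume "c x = 2" "c i = 2" thus ?thesis using pat11_11[OF T assms(2)] by simp
  qed
qed

lemma same_ne:
  assumes "same_block P x i" "same_block P i x" "c x \<noteq> c i" "c x = 1 \<or> c x = 2" "c i = 1 \<or> c i = 2"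
  shows "contains (P,c) P11_12 \<or> contains (P,c) P12_11"
proof (cases "x < i")
  case True
  show ?thesis using assms(3,4,5)
  proof (elim disjE)
    assume "c x = 1" "c i = 2" thus ?thesis using pat11_12[OF True assms(1)] by simp
  next
    assume "c x = 2" "c i = 1" thus ?thesis using pat12_11[OF True assms(1)] by simp
  qed simp_all
next
  case False
  hence T: "i < x" using assms(3) by (cases "i = x") auto
  show ?thesis using assms(3,4,5)
  proof (elim disjE)
    assume "c x = 1" "c i = 2" thus ?thesis using pat12_11[OF T assms(2)] by simp
  next
    assume "c x = 2" "c i = 1" thus ?thesis using pat11_12[OF T assms(2)] by simp
  qed simp_all
qed

lemma diff_eq:
  assumes "diff_blocks P x i" "diff_blocks P i x" "x \<noteq> i" "c x = c i"
  shows "contains (P,c) P11_21"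
proof (cases "x < i")
  case True
  show ?thesis using pat11_21[OF True assms(1) assms(4)] .
next
  case False
  hence T: "i < x" using assms(3) by simp
  then show ?thesis using pat11_21[OF T assms(2)] assms(4) by simp
qed

definition QR :: "nat set \<Rightarrow> (nat \<Rightarrow> nat \<Rightarrow> bool) \<Rightarrow> nat set set" where
  "QR A R = (\<lambda>x. {i\<in>A. R x i}) ` A"

lemma QR_props:
  assumes refl: "\<And>x. x \<in> A \<Longrightarrow> R x x"
    and sym: "\<And>x y. x \<in> A \<Longrightarrow> y \<in> A \<Longrightarrow> R x y \<Longrightarrow> R y x"
    and trans: "\<And>x y z. x \<in> A \<Longrightarrow> y \<in> A \<Longrightarrow> z \<in> A \<Longrightarrow> R x y \<Longrightarrow> R y z \<Longrightarrow> R x z"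
  shows "partition_on A (QR A R)"
    and "same_block (QR A R) i j \<longleftrightarrow> i \<in> A \<and> j \<in> A \<and> R i j"
    and "\<Union>(QR A R) = A"
proof -
  have eqc: "{i\<in>A. R x i} = {i\<in>A. R y i}" if "x \<in> A" "y \<in> A" "R x y" for x y
  proof (rule set_eqI, rule iffI)
    fix k assume "k \<in> {i\<in>A. R x i}"
    hence k: "k \<in> A" "R x k" by auto
    have "R y k" using trans[OF that(2) that(1) k(1) sym[OF that(1) that(2) that(3)] k(2)] .
    thus "k \<in> {i\<in>A. R y i}" using k by simp
  next
    fix k assume "k \<in> {i\<in>A. R y i}"
    hence k: "k \<in> A" "R y k" by auto
    have "R x k" using trans[OF that(1) that(2) k(1) that(3) k(2)] .
    thus "k \<in> {i\<in>A. R x i}" using k by simp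
  qed
  show U: "\<Union>(QR A R) = A" unfolding QR_def using refl by auto
  have D: "disjoint (QR A R)"
  proof (rule disjointI)
    fix a b assume "a \<in> QR A R" "b \<in> QR A R" "a \<noteq> b"
    then obtain x y where x: "x \<in> A" "a = {i\<in>A. R x i}" and y: "y \<in> A" "b = {i\<in>A. R y i}"
      and ne: "a \<noteq> b" unfolding QR_def by blast
    show "a \<inter> b = {}"
    proof (rule ccontr)
      assume "a \<inter> b \<noteq> {}"
      then obtain z where z: "z \<in> A" "R x z" "R y z" using x y by blast
      have "R x y" using trans[OF x(1) z(1) y(1) z(2) sym[OF y(1) z(1) z(3)]] .
      thus False using eqc[OF x(1) y(1)] x y ne by simp
    qed
  qed
  have E: "{} \<notin> QR A R" unfolding QR_def using refl by blast
  show "partition_on A (QR A R)" using U D E unfolding partition_on_def by blast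
  show "same_block (QR A R) i j \<longleftrightarrow> i \<in> A \<and> j \<in> A \<and> R i j"
  proof
    assume "same_block (QR A R) i j"
    then obtain x where x: "x \<in> A" "i \<in> A" "R x i" "j \<in> A" "R x j"
      unfolding same_block_def QR_def by blast
    show "i \<in> A \<and> j \<in> A \<and> R i j" using x trans[OF x(2) x(1) x(4) sym[OF x(1) x(2) x(3)] x(5)] by blast
  next
    assume h: "i \<in> A \<and> j \<in> A \<and> R i j"
    hence ij: "i \<in> {k\<in>A. R i k} \<and> j \<in> {k\<in>A. R i k}" using refl by blast
    have m: "{k\<in>A. R i k} \<in> QR A R" unfolding QR_def using h by blast
    show "same_block (QR A R) i j" unfolding same_block_def using ij m by (rule bexI[where x="{k\<in>A. R i k}"])
  qed
qed

lemma card_gen: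
  assumes eq: "avoiding n S = (\<lambda>c. (QR {1..n} (Rf c), c)) ` ({1..n} \<rightarrow>\<^sub>E {1::nat, 2})"
  shows "card (avoiding n S) = 2 ^ n"
proof -
  have "inj_on (\<lambda>c. (QR {1..n} (Rf c), c)) ({1..n} \<rightarrow>\<^sub>E {1::nat, 2})"
    by (auto intro: inj_onI)
  hence "card (avoiding n S) = card ({1..n} \<rightarrow>\<^sub>E {1::nat, 2})"
    unfolding eq by (rule card_image)
  also have "\<dots> = 2 ^ n" by (simp add: card_PiE numeral_2_eq_2)
  finally show ?thesis .
qed

lemma col: "c \<in> {1..n} \<rightarrow>\<^sub>E {1::nat, 2} \<Longrightarrow> x \<in> {1..n} \<Longrightarrow> c x = 1 \<or> c x = 2"
  by auto

lemma case1: "avoiding n {P11_11, P11_12, P12_11}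
   = (\<lambda>c. (QR {1..n} (\<lambda>x i. x = i), c)) ` ({1..n} \<rightarrow>\<^sub>E {1::nat, 2})"
proof
  show "avoiding n {P11_11, P11_12, P12_11}
   \<subseteq> (\<lambda>c. (QR {1..n} (\<lambda>x i. x = i), c)) ` ({1..n} \<rightarrow>\<^sub>E {1::nat, 2})"
  proof
    fix s assume s: "s \<in> avoiding n {P11_11, P11_12, P12_11}"
    obtain P c where s_eq: "s = (P, c)" by fastforce
    have P: "partition_on {1..n} P" and c: "c \<in> {1..n} \<rightarrow>\<^sub>E {1, 2}"
      and a: "\<not> contains (P,c) P11_11" "\<not> contains (P,c) P11_12" "\<not> contains (P,c) P12_11"
      using s s_eq unfolding avoiding_def colored_partitions_def by auto
    have sb: "same_block P x i \<longleftrightarrow> x = i" if "x \<in> {1..n}" "i \<in> {1..n}" for x i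
    proof
      assume h: "same_block P x i"
      show "x = i"
      proof (rule ccontr)
        assume "x \<noteq> i"
        hence "x < i \<or> i < x" by arith
        moreover have "c x = 1 \<or> c x = 2" "c i = 1 \<or> c i = 2" using col[OF c] that by auto
        ultimately show False using a h same_block_sym[of P x i] same_any[of P x i c] \<open>x \<noteq> i\<close> by blast
      qed
    next
      assume "x = i" thus "same_block P x i"
        using P that unfolding partition_on_def same_block_def by blast
    qed
    have "P = (\<lambda>x. {i\<in>{1..n}. same_block P x i}) ` {1..n}" by (rule blocks_eq[OF P])
    also have "\<dots> = QR {1..n} (\<lambda>x i. x = i)"
      unfolding QR_def by (rule image_cong[OF refl]) (use sb in auto)
    finally have "P = QR {1..n} (\<lambda>x i. x = i)" .
    thus "s \<in> (\<lambda>c. (QR {1..n} (\<lambda>x i. x = i), c)) ` ({1..n} \<rightarrow>\<^sub>E {1::nat, 2})"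
      using s_eq c by auto
  qed
next
  show "(\<lambda>c. (QR {1..n} (\<lambda>x i. x = i), c)) ` ({1..n} \<rightarrow>\<^sub>E {1::nat, 2})
     \<subseteq> avoiding n {P11_11, P11_12, P12_11}"
  proof
    fix s assume "s \<in> (\<lambda>c. (QR {1..n} (\<lambda>x i. x = i), c)) ` ({1..n} \<rightarrow>\<^sub>E {1::nat, 2})"
    then obtain c where c: "c \<in> {1..n} \<rightarrow>\<^sub>E {1::nat, 2}" and s: "s = (QR {1..n} (\<lambda>x i. x = i), c)"
      by blast
    have Q1: "partition_on {1..n} (QR {1..n} (\<lambda>x i. x = i))" by (rule QR_props(1)) auto
    have Q2: "\<And>i j. same_block (QR {1..n} (\<lambda>x i. x = i)) i j \<longleftrightarrow> i \<in> {1..n} \<and> j \<in> {1..n} \<and> (\<lambda>x i. x = i) i j"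
      by (rule QR_props(2)) auto
    have Q3: "\<Union>(QR {1..n} (\<lambda>x i. x = i)) = {1..n}" by (rule QR_props(3)) auto
    have n0: "\<not> contains (QR {1..n} (\<lambda>x i. x = i), c) P11_11" unfolding contains.simps diff_blocks_def Q2 Q3 by auto
    have n1: "\<not> contains (QR {1..n} (\<lambda>x i. x = i), c) P11_12" unfolding contains.simps diff_blocks_def Q2 Q3 by auto
    have n2: "\<not> contains (QR {1..n} (\<lambda>x i. x = i), c) P12_11" unfolding contains.simps diff_blocks_def Q2 Q3 by auto
    show "s \<in> avoiding n {P11_11, P11_12, P12_11}"
      unfolding avoiding_def colored_partitions_def s using Q1 c n0 n1 n2 by simp
  qed
qed

lemma case2: "avoiding n {P11_12, P12_11, P11_21}
   = (\<lambda>c. (QR {1..n} (\<lambda>x i. c x = c i), c)) ` ({1..n} \<rightarrow>\<^sub>E {1::nat, 2})"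
proof
  show "avoiding n {P11_12, P12_11, P11_21}
   \<subseteq> (\<lambda>c. (QR {1..n} (\<lambda>x i. c x = c i), c)) ` ({1..n} \<rightarrow>\<^sub>E {1::nat, 2})"
  proof
    fix s assume s: "s \<in> avoiding n {P11_12, P12_11, P11_21}"
    obtain P c where s_eq: "s = (P, c)" by fastforce
    have P: "partition_on {1..n} P" and c: "c \<in> {1..n} \<rightarrow>\<^sub>E {1, 2}"
      and a: "\<not> contains (P,c) P11_12" "\<not> contains (P,c) P12_11" "\<not> contains (P,c) P11_21"
      using s s_eq unfolding avoiding_def colored_partitions_def by auto
    have U: "\<Union>P = {1..n}" using P unfolding partition_on_def by blast
    have sb: "same_block P x i \<longleftrightarrow> c x = c i" if xi: "x \<in> {1..n}" "i \<in> {1..n}" for x i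
    proof
      assume h: "same_block P x i"
      show "c x = c i"
      proof (rule ccontr)
        assume ne: "c x \<noteq> c i"
        hence "x < i \<or> i < x" by (cases "x = i") auto
        moreover have "c x = 1 \<or> c x = 2" "c i = 1 \<or> c i = 2" using col[OF c] xi by auto
        ultimately show False using a h ne same_block_sym[of P x i] same_ne[of P x i c] by blast
      qed
    next
      assume e: "c x = c i"
      show "same_block P x i"
      proof (rule ccontr)
        assume h: "\<not> same_block P x i"
        hence "diff_blocks P x i" "diff_blocks P i x"
          using U xi same_block_sym[of P x i] unfolding diff_blocks_def by auto
        moreover have "x \<noteq> i" using h P xi unfolding partition_on_def same_block_def by blast
        hence "x < i \<or> i < x" by arith
        ultimately show False using a e diff_eq[of P x i c] by blast
      qed
    qed
    have "P = (\<lambda>x. {i\<in>{1..n}. same_block P x i}) ` {1..n}" by (rule blocks_eq[OF P])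
    also have "\<dots> = QR {1..n} (\<lambda>x i. c x = c i)"
      unfolding QR_def by (rule image_cong[OF refl]) (use sb in auto)
    finally have "P = QR {1..n} (\<lambda>x i. c x = c i)" .
    thus "s \<in> (\<lambda>c. (QR {1..n} (\<lambda>x i. c x = c i), c)) ` ({1..n} \<rightarrow>\<^sub>E {1::nat, 2})"
      using s_eq c by auto
  qed
next
  show "(\<lambda>c. (QR {1..n} (\<lambda>x i. c x = c i), c)) ` ({1..n} \<rightarrow>\<^sub>E {1::nat, 2})
     \<subseteq> avoiding n {P11_12, P12_11, P11_21}"
  proof
    fix s assume "s \<in> (\<lambda>c. (QR {1..n} (\<lambda>x i. c x = c i), c)) ` ({1..n} \<rightarrow>\<^sub>E {1::nat, 2})"
    then obtain c where c: "c \<in> {1..n} \<rightarrow>\<^sub>E {1::nat, 2}" and s: "s = (QR {1..n} (\<lambda>x i. c x = c i), c)"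
      by blast
    have Q1: "partition_on {1..n} (QR {1..n} (\<lambda>x i. c x = c i))" by (rule QR_props(1)) auto
    have Q2: "\<And>i j. same_block (QR {1..n} (\<lambda>x i. c x = c i)) i j \<longleftrightarrow> i \<in> {1..n} \<and> j \<in> {1..n} \<and> (\<lambda>x i. c x = c i) i j"
      by (rule QR_props(2)) auto
    have Q3: "\<Union>(QR {1..n} (\<lambda>x i. c x = c i)) = {1..n}" by (rule QR_props(3)) auto
    have n0: "\<not> contains (QR {1..n} (\<lambda>x i. c x = c i), c) P11_12" unfolding contains.simps diff_blocks_def Q2 Q3 by auto
    have n1: "\<not> contains (QR {1..n} (\<lambda>x i. c x = c i), c) P12_11" unfolding contains.simps diff_blocks_def Q2 Q3 by auto
    have n2: "\<not> contains (QR {1..n} (\<lambda>x i. c x = c i), c) P11_21" unfolding contains.simps diff_blocks_def Q2 Q3 by auto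
    show "s \<in> avoiding n {P11_12, P12_11, P11_21}"
      unfolding avoiding_def colored_partitions_def s using Q1 c n0 n1 n2 by simp
  qed
qed

lemma case3: assumes n: "n \<ge> 1" shows "avoiding n {P11_21, P11_22, P12_21}
   = (\<lambda>c. (QR {1..n} (\<lambda>x i. True), c)) ` ({1..n} \<rightarrow>\<^sub>E {1::nat, 2})"
proof
  show "avoiding n {P11_21, P11_22, P12_21}
   \<subseteq> (\<lambda>c. (QR {1..n} (\<lambda>x i. True), c)) ` ({1..n} \<rightarrow>\<^sub>E {1::nat, 2})"
  proof
    fix s assume s: "s \<in> avoiding n {P11_21, P11_22, P12_21}"
    obtain P c where s_eq: "s = (P, c)" by fastforce
    have P: "partition_on {1..n} P" and c: "c \<in> {1..n} \<rightarrow>\<^sub>E {1, 2}"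
      and a: "\<not> contains (P,c) P11_21" "\<not> contains (P,c) P11_22" "\<not> contains (P,c) P12_21"
      using s s_eq unfolding avoiding_def colored_partitions_def by auto
    have U: "\<Union>P = {1..n}" using P unfolding partition_on_def by blast
    have sb: "same_block P x i" if xi: "x \<in> {1..n}" "i \<in> {1..n}" for x i
    proof (rule ccontr)
      assume h: "\<not> same_block P x i"
      hence "diff_blocks P x i" "diff_blocks P i x"
        using U xi same_block_sym[of P x i] unfolding diff_blocks_def by auto
      moreover have "x \<noteq> i" using h P xi unfolding partition_on_def same_block_def by blast
      hence "x < i \<or> i < x" by arith
      moreover have "c x = 1 \<or> c x = 2" "c i = 1 \<or> c i = 2" using col[OF c] xi by auto
      ultimately show False using a diff_any[of P x i c] by blast
    qed
    have "P = (\<lambda>x. {i\<in>{1..n}. same_block P x i}) ` {1..n}" by (rule blocks_eq[OF P])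
    also have "\<dots> = QR {1..n} (\<lambda>x i. True)"
      unfolding QR_def by (rule image_cong[OF refl]) (use sb in auto)
    finally have "P = QR {1..n} (\<lambda>x i. True)" .
    thus "s \<in> (\<lambda>c. (QR {1..n} (\<lambda>x i. True), c)) ` ({1..n} \<rightarrow>\<^sub>E {1::nat, 2})"
      using s_eq c by auto
  qed
next
  show "(\<lambda>c. (QR {1..n} (\<lambda>x i. True), c)) ` ({1..n} \<rightarrow>\<^sub>E {1::nat, 2})
     \<subseteq> avoiding n {P11_21, P11_22, P12_21}"
  proof
    fix s assume "s \<in> (\<lambda>c. (QR {1..n} (\<lambda>x i. True), c)) ` ({1..n} \<rightarrow>\<^sub>E {1::nat, 2})"
    then obtain c where c: "c \<in> {1..n} \<rightarrow>\<^sub>E {1::nat, 2}" and s: "s = (QR {1..n} (\<lambda>x i. True), c)"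
      by blast
    have Q1: "partition_on {1..n} (QR {1..n} (\<lambda>x i. True))" by (rule QR_props(1)) auto
    have Q2: "\<And>i j. same_block (QR {1..n} (\<lambda>x i. True)) i j \<longleftrightarrow> i \<in> {1..n} \<and> j \<in> {1..n} \<and> (\<lambda>x i. True) i j"
      by (rule QR_props(2)) auto
    have Q3: "\<Union>(QR {1..n} (\<lambda>x i. True)) = {1..n}" by (rule QR_props(3)) auto
    have n0: "\<not> contains (QR {1..n} (\<lambda>x i. True), c) P11_21" unfolding contains.simps diff_blocks_def Q2 Q3 by auto
    have n1: "\<not> contains (QR {1..n} (\<lambda>x i. True), c) P11_22" unfolding contains.simps diff_blocks_def Q2 Q3 by auto
    have n2: "\<not> contains (QR {1..n} (\<lambda>x i. True), c) P12_21" unfolding contains.simps diff_blocks_def Q2 Q3 by auto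
    show "s \<in> avoiding n {P11_21, P11_22, P12_21}"
      unfolding avoiding_def colored_partitions_def s using Q1 c n0 n1 n2 by simp
  qed
qed

theorem mainTheorem13:
  fixes n :: nat
  assumes "n \<ge> 1"
  shows "card (avoiding n {P11_11, P11_12, P12_11}) = 2 ^ n
       \<and> card (avoiding n {P11_12, P12_11, P11_21}) = 2 ^ n
       \<and> card (avoiding n {P11_21, P11_22, P12_21}) = 2 ^ n"
  using card_gen[OF case1] card_gen[OF case2] card_gen[OF case3[OF assms]] by blast

end
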